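(* Let $k\ge 2$, let $V=\{(i_1,\ldots,i_{k-1}) : 1\le i_j\le k \text{ for all } j\}$, and for $j=1,\ldots,k-1$ let $\mathcal{H}_j$ be the $k$-uniform hypergraph on $V$ whose edges are the $k$-element sets $\{v^1,\ldots,v^k\}\subseteq V$ with $\{v^1_j,\ldots,v^k_j\}=\{1,\ldots,k\}$ (the $j$-th coordinates are pairwise distinct). Then each $\mathcal{H}_j$ admits a polychromatic $k$-coloring, and the chromatic number of $\bigcup_{j=1}^{k-1}\mathcal{H}_j$ equals $k$ (in particular it has no proper $(k-1)$-coloring).
   Context: A $k$-coloring of a hypergraph is a map from its vertex set to $\{1,\ldots,k\}$; it is polychromatic if every edge contains vertices of all $k$ colors, and proper if every edge with at least two vertices contains two vertices of different colors. The chromatic number is the smallest $k$ admitting a proper $k$-coloring. The union of hypergraphs on a common vertex set has as edge set the union of their edge sets. *)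

theory Defs
  imports Main
begin

definition is_coloring :: "'v set \<Rightarrow> nat \<Rightarrow> ('v \<Rightarrow> nat) \<Rightarrow> bool" where
  "is_coloring V k c \<longleftrightarrow> (\<forall>v\<in>V. c v \<in> {1..k})"

definition polychromatic :: "'v set \<Rightarrow> 'v set set \<Rightarrow> nat \<Rightarrow> ('v \<Rightarrow> nat) \<Rightarrow> bool" where
  "polychromatic V E k c \<longleftrightarrow> is_coloring V k c \<and> (\<forall>e\<in>E. {1..k} \<subseteq> c ` e)"

definition proper_coloring :: "'v set \<Rightarrow> 'v set set \<Rightarrow> nat \<Rightarrow> ('v \<Rightarrow> nat) \<Rightarrow> bool" where
  "proper_coloring V E k c \<longleftrightarrow> is_coloring V k c \<and>
     (\<forall>e\<in>E. card e \<ge> 2 \<longrightarrow> (\<exists>x\<in>e. \<exists>y\<in>e. c x \<noteq> c y))"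

definition chromatic_number :: "'v set \<Rightarrow> 'v set set \<Rightarrow> nat" where
  "chromatic_number V E = (LEAST k. \<exists>c. proper_coloring V E k c)"

text \<open>Vertex set: (k-1)-tuples with entries in {1..k}; coordinates indexed 0..k-2,
 represented as extensional functions (value 0 outside the index range).\<close>
definition grid :: "nat \<Rightarrow> (nat \<Rightarrow> nat) set" where
  "grid k = {v. (\<forall>j<k - 1. v j \<in> {1..k}) \<and> (\<forall>j\<ge>k - 1. v j = 0)}"

definition Hj :: "nat \<Rightarrow> nat \<Rightarrow> (nat \<Rightarrow> nat) set set" where
  "Hj k j = {e. e \<subseteq> grid k \<and> card e = k \<and> (\<lambda>v. v j) ` e = {1..k}}"

end

theory Submission
  imports Defs
begin

lemma no_proper:
  assumes k2: "k \<ge> 2" and pc: "proper_coloring (grid k) (\<Union>j<k - 1. Hj k j) (k - 1) c"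
  shows False
proof -
  have col: "\<And>v. v \<in> grid k \<Longrightarrow> c v \<in> {1..k-1}"
    using pc unfolding proper_coloring_def is_coloring_def by blast
  have pr: "\<And>e j. j < k - 1 \<Longrightarrow> e \<in> Hj k j \<Longrightarrow> \<exists>x\<in>e. \<exists>y\<in>e. c x \<noteq> c y"
  proof -
    fix e j assume j: "j < k - 1" and e: "e \<in> Hj k j"
    hence "card e \<ge> 2" using k2 unfolding Hj_def by auto
    moreover have "e \<in> (\<Union>j<k - 1. Hj k j)" using j e by blast
    ultimately show "\<exists>x\<in>e. \<exists>y\<in>e. c x \<noteq> c y"
      using pc unfolding proper_coloring_def by blast
  qed
  have miss: "\<exists>m\<in>{1..k}. \<forall>v\<in>grid k. c v = a \<longrightarrow> v j \<noteq> m" if j: "j < k - 1" for a j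
  proof (rule ccontr)
    assume "\<not> ?thesis"
    hence all: "\<forall>i\<in>{1..k}. \<exists>v\<in>grid k. c v = a \<and> v j = i" by blast
    then obtain f where f: "\<And>i. i \<in> {1..k} \<Longrightarrow> f i \<in> grid k \<and> c (f i) = a \<and> f i j = i"
      by metis
    define e where "e = f ` {1..k}"
    have inj: "inj_on f {1..k}"
    proof (rule inj_onI)
      fix x y assume "x \<in> {1..k}" "y \<in> {1..k}" "f x = f y"
      thus "x = y" using f by metis
    qed
    have "card e = k" unfolding e_def using card_image[OF inj] by simp
    moreover have "e \<subseteq> grid k" unfolding e_def using f by auto
    moreover have "(\<lambda>v. v j) ` e = {1..k}" unfolding e_def image_image
    proof -
      have "(\<lambda>i. f i j) ` {1..k} = (\<lambda>i. i) ` {1..k}" by (rule image_cong) (simp_all add: f)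
      thus "(\<lambda>i. f i j) ` {1..k} = {1..k}" by simp
    qed
    ultimately have "e \<in> Hj k j" unfolding Hj_def by blast
    from pr[OF j this] obtain x y where "x \<in> e" "y \<in> e" "c x \<noteq> c y" by blast
    thus False unfolding e_def using f by auto
  qed
  then obtain m where m: "\<And>a. a \<in> {1..k-1} \<Longrightarrow> m a \<in> {1..k} \<and> (\<forall>v\<in>grid k. c v = a \<longrightarrow> v (a - 1) \<noteq> m a)"
  proof -
    have "\<forall>a\<in>{1..k-1}. \<exists>m\<in>{1..k}. \<forall>v\<in>grid k. c v = a \<longrightarrow> v (a - 1) \<noteq> m"
    proof
      fix a assume "a \<in> {1..k-1}"
      hence "a - 1 < k - 1" by auto
      thus "\<exists>m\<in>{1..k}. \<forall>v\<in>grid k. c v = a \<longrightarrow> v (a - 1) \<noteq> m" by (rule miss)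
    qed
    hence "\<forall>a\<in>{1..k-1}. \<exists>m. m \<in> {1..k} \<and> (\<forall>v\<in>grid k. c v = a \<longrightarrow> v (a - 1) \<noteq> m)" by blast
    from bchoice[OF this] obtain g where "\<forall>a\<in>{1..k-1}. g a \<in> {1..k} \<and> (\<forall>v\<in>grid k. c v = a \<longrightarrow> v (a - 1) \<noteq> g a)"
      by blast
    then show ?thesis using that by blast
  qed
  define x where "x = (\<lambda>j. if j < k - 1 then m (j + 1) else 0)"
  have xg: "x \<in> grid k" unfolding grid_def x_def using m by auto
  define a where "a = c x"
  have a: "a \<in> {1..k-1}" using col[OF xg] a_def by simp
  have "x (a - 1) = m a" unfolding x_def using a by auto
  thus False using m[OF a] xg a_def by blast
qed

lemma has_proper:
  assumes k2: "k \<ge> 2"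
  shows "\<exists>c. proper_coloring (grid k) (\<Union>j<k - 1. Hj k j) k c"
proof -
  define c where "c = (\<lambda>v::nat\<Rightarrow>nat. LEAST i. i \<in> {1..k} - v ` {..<k-1})"
  have ex: "\<exists>i. i \<in> {1..k} - v ` {..<k-1}" for v :: "nat \<Rightarrow> nat"
  proof -
    have "card (v ` {..<k-1}) \<le> k - 1" using card_image_le[of "{..<k-1}" v] by simp
    moreover have "{1..k} \<subseteq> v ` {..<k-1} \<Longrightarrow> k \<le> card (v ` {..<k-1})"
      using card_mono[of "v ` {..<k-1}" "{1..k}"] by simp
    ultimately have "\<not> {1..k} \<subseteq> v ` {..<k-1}" using k2 by linarith
    thus ?thesis by blast
  qed
  have cv: "c v \<in> {1..k} - v ` {..<k-1}" for v unfolding c_def using ex[of v] by (metis LeastI)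
  have "proper_coloring (grid k) (\<Union>j<k - 1. Hj k j) k c"
    unfolding proper_coloring_def is_coloring_def
  proof (intro conjI ballI impI)
    fix v show "c v \<in> {1..k}" using cv[of v] by blast
  next
    fix e assume "e \<in> (\<Union>j<k - 1. Hj k j)"
    then obtain j where j: "j < k - 1" and e: "e \<subseteq> grid k" "card e = k" "(\<lambda>v. v j) ` e = {1..k}"
      unfolding Hj_def by blast
    have "e \<noteq> {}" using e k2 by auto
    then obtain x0 where x0: "x0 \<in> e" by blast
    have "c x0 \<in> {1..k}" using cv[of x0] by blast
    then obtain y where y: "y \<in> e" "y j = c x0" using e(3) by (metis imageE)
    have "c y \<noteq> y j" using cv[of y] j by blast
    thus "\<exists>x\<in>e. \<exists>y\<in>e. c x \<noteq> c y" using x0 y by metis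
  qed
  thus ?thesis by blast
qed

theorem mainTheorem2:
  fixes k :: nat
  assumes "k \<ge> 2"
  shows "(\<forall>j<k - 1. \<exists>c. polychromatic (grid k) (Hj k j) k c)
       \<and> chromatic_number (grid k) (\<Union>j<k - 1. Hj k j) = k
       \<and> \<not> (\<exists>c. proper_coloring (grid k) (\<Union>j<k - 1. Hj k j) (k - 1) c)"
proof (intro conjI)
  show "\<forall>j<k - 1. \<exists>c. polychromatic (grid k) (Hj k j) k c"
  proof (intro allI impI)
    fix j assume j: "j < k - 1"
    have "polychromatic (grid k) (Hj k j) k (\<lambda>v. v j)"
      unfolding polychromatic_def is_coloring_def Hj_def grid_def using j by auto
    thus "\<exists>c. polychromatic (grid k) (Hj k j) k c" by blast
  qed
  show np: "\<not> (\<exists>c. proper_coloring (grid k) (\<Union>j<k - 1. Hj k j) (k - 1) c)"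
    using no_proper[OF assms] by blast
  show "chromatic_number (grid k) (\<Union>j<k - 1. Hj k j) = k"
    unfolding chromatic_number_def
  proof (rule Least_equality)
    show "\<exists>c. proper_coloring (grid k) (\<Union>j<k - 1. Hj k j) k c" using has_proper[OF assms] .
  next
    fix y assume "\<exists>c. proper_coloring (grid k) (\<Union>j<k - 1. Hj k j) y c"
    then obtain c where c: "proper_coloring (grid k) (\<Union>j<k - 1. Hj k j) y c" by blast
    show "k \<le> y"
    proof (rule ccontr)
      assume "\<not> k \<le> y"
      hence "proper_coloring (grid k) (\<Union>j<k - 1. Hj k j) (k - 1) c"
        using c unfolding proper_coloring_def is_coloring_def by auto
      thus False using np by blast
    qed
  qed
qed

end
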